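(* Let $A\in\mathbb{R}^{m\times N}$, $\eta\ge0$, let $x\in\mathbb{R}^N$ be nonzero, let $k\in\{1,\dots,N\}$, and let $y=Ax+\varepsilon$ with $\lVert\varepsilon\rVert_2\le\eta$. Let $1<q\le\infty$ and set $C_q(k,x)=\left(4k^{1-1/q}+s_q(x)^{1-1/q}\right)^{q/(q-1)}$. If $\rho_{q,C_q(k,x)}(A)>0$, then any solution $\hat x$ of $$\min_{z\in\mathbb{R}^N\setminus\{0\}}\frac{\lVert z\rVert_1}{\lVert z\rVert_q}\quad\text{subject to}\quad\lVert y-Az\rVert_2\le\eta$$ obeys $$\lVert\hat x-x\rVert_q\le\frac{2\eta}{\rho_{q,C_q(k,x)}(A)}+k^{1/q-1}\sigma_{k,1}(x),$$ $$\lVert\hat x-x\rVert_1\le\frac{\left(4k^{1-1/q}+2s_q(x)^{1-1/q}\right)\eta}{\rho_{q,C_q(k,x)}(A)}+\left(4+(s_q(x)/k)^{1-1/q}\right)\sigma_{k,1}(x).$$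
   Context: For nonzero $z\in\mathbb{R}^N$ and $q\in(1,\infty)$, $s_q(z)=\left(\lVert z\rVert_1/\lVert z\rVert_q\right)^{q/(q-1)}$ (so $s_q(z)^{1-1/q}=\lVert z\rVert_1/\lVert z\rVert_q$), and $s_\infty(z)=\lVert z\rVert_1/\lVert z\rVert_\infty$. For real $s\ge1$, $\rho_{q,s}(A)=\min\{\lVert Az\rVert_2/\lVert z\rVert_q: z\ne0,\ s_q(z)\le s\}$. For $q=\infty$ interpret $q/(q-1)=1$, $1-1/q=1$, $1/q-1=-1$. $\sigma_{k,1}(x)=\inf\{\lVert x-z\rVert_1: z\in\mathbb{R}^N \text{ has at most } k \text{ nonzero entries}\}$ is the $\ell_1$-error of best $k$-term approximation. *)

theory Defs
  imports "HOL-Analysis.Analysis"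
begin

text \<open>Vectors in R^N are represented as real^'n (N = CARD('n)), matrices
A in R^(m x N) as real^'n^'m, with A *v z the matrix-vector product.\<close>

definition l1norm :: "real^'n \<Rightarrow> real" where
  "l1norm z = (\<Sum>i\<in>UNIV. \<bar>z $ i\<bar>)"

definition lqnorm :: "ereal \<Rightarrow> real^'n \<Rightarrow> real" where
  "lqnorm q z = (if q = \<infinity> then Max (range (\<lambda>i. \<bar>z $ i\<bar>))
     else (\<Sum>i\<in>UNIV. \<bar>z $ i\<bar> powr real_of_ereal q) powr (1 / real_of_ereal q))"

definition qconj :: "ereal \<Rightarrow> real" where
  "qconj q = (if q = \<infinity> then 1 else real_of_ereal q / (real_of_ereal q - 1))"

definition qexp :: "ereal \<Rightarrow> real" where
  "qexp q = (if q = \<infinity> then 1 else 1 - 1 / real_of_ereal q)"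

definition sq :: "ereal \<Rightarrow> real^'n \<Rightarrow> real" where
  "sq q z = (l1norm z / lqnorm q z) powr qconj q"

definition rho :: "ereal \<Rightarrow> real \<Rightarrow> real^'n^'m \<Rightarrow> real" where
  "rho q s A = Inf {norm (A *v z) / lqnorm q z | z. z \<noteq> 0 \<and> sq q z \<le> s}"

definition sigma1 :: "nat \<Rightarrow> real^'n \<Rightarrow> real" where
  "sigma1 k x = Inf {l1norm (x - z) | z. card {i. z $ i \<noteq> 0} \<le> k}"

definition Cq :: "ereal \<Rightarrow> nat \<Rightarrow> real^'n \<Rightarrow> real" where
  "Cq q k x = (4 * real k powr qexp q + sq q x powr qexp q) powr qconj q"

end

theory Submission
  imports Defs
begin


lemma pconv:
  fixes p x y t :: real
  assumes "p \<ge> 1" "x \<ge> 0" "y \<ge> 0" "0 \<le> t" "t \<le> 1"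
  shows "((1-t)*x + t*y) powr p \<le> (1-t)*x powr p + t*y powr p"
proof -
  have tp: "s powr p \<le> s" if "0 \<le> s" "s \<le> 1" for s :: real
    using powr_mono'[of 1 p s] that assms(1) by (cases "s = 0") auto
  show ?thesis
  proof (cases "x = 0 \<or> y = 0")
    case True
    then show ?thesis
    proof
      assume "x = 0"
      then have "((1-t)*x + t*y) powr p = t powr p * y powr p"
        using assms by (simp add: powr_mult)
      also have "\<dots> \<le> t * y powr p" using tp[of t] assms by (simp add: mult_right_mono)
      finally show ?thesis using \<open>x = 0\<close> by simp
    next
      assume "y = 0"
      then have "((1-t)*x + t*y) powr p = (1-t) powr p * x powr p"
        using assms by (simp add: powr_mult)
      also have "\<dots> \<le> (1-t) * x powr p" using tp[of "1-t"] assms by (simp add: mult_right_mono)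
      finally show ?thesis using \<open>y = 0\<close> by simp
    qed
  next
    case False
    then have "x > 0" "y > 0" using assms by auto
    then show ?thesis
      using convex_onD[OF powr_convex[OF assms(1)], of t x y] assms by simp
  qed
qed

lemma pconvex: "p \<ge> 1 \<Longrightarrow> convex_on {0..} (\<lambda>x::real. x powr p)"
  by (rule convex_onI) (auto intro!: pconv simp: convex_real_interval)

lemma holder_count:
  fixes f :: "'a \<Rightarrow> real" and p :: real
  assumes "finite S" "p > 1" "\<And>i. i \<in> S \<Longrightarrow> f i \<ge> 0"
  shows "(\<Sum>i\<in>S. f i) \<le> real (card S) powr (1 - 1/p) * (\<Sum>i\<in>S. f i powr p) powr (1/p)"
proof (cases "S = {}")
  case True then show ?thesis by simp
next
  case False
  define n where "n = real (card S)"
  have n: "n > 0" using False assms(1) by (simp add: n_def card_gt_0_iff)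
  have "(\<Sum>i\<in>S. (1/n) *\<^sub>R f i) powr p \<le> (\<Sum>i\<in>S. (1/n) * f i powr p)"
    by (rule convex_on_sum[OF assms(1) False pconvex]) (use assms n in \<open>auto simp: n_def\<close>)
  then have "((\<Sum>i\<in>S. f i) / n) powr p \<le> (\<Sum>i\<in>S. f i powr p) / n"
    by (simp add: sum_divide_distrib[symmetric] sum_distrib_left[symmetric] divide_inverse mult.commute)
  then have "(\<Sum>i\<in>S. f i) powr p / n powr p \<le> (\<Sum>i\<in>S. f i powr p) / n"
    using n assms by (simp add: powr_divide sum_nonneg)
  then have h: "(\<Sum>i\<in>S. f i) powr p \<le> n powr (p - 1) * (\<Sum>i\<in>S. f i powr p)"
    using n by (simp add: field_simps powr_diff)
  have s0: "(\<Sum>i\<in>S. f i) \<ge> 0" using assms by (simp add: sum_nonneg)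
  have "(\<Sum>i\<in>S. f i) = ((\<Sum>i\<in>S. f i) powr p) powr (1/p)"
    using s0 assms by (simp add: powr_powr)
  also have "\<dots> \<le> (n powr (p - 1) * (\<Sum>i\<in>S. f i powr p)) powr (1/p)"
    using h assms by (intro powr_mono2) auto
  also have "\<dots> = n powr (1 - 1/p) * (\<Sum>i\<in>S. f i powr p) powr (1/p)"
    using n assms by (simp add: powr_mult powr_powr sum_nonneg diff_divide_distrib)
  finally show ?thesis by (simp add: n_def)
qed



lemma lq_fin: "p > 1 \<Longrightarrow> lqnorm (ereal p) z = (\<Sum>i\<in>UNIV. \<bar>z $ i\<bar> powr p) powr (1/p)"
  by (simp add: lqnorm_def)

lemma lq_nonneg: "lqnorm q (z::real^'n) \<ge> 0"
proof -
  have "\<bar>z $ i\<bar> \<le> Max (range (\<lambda>i. \<bar>z $ i\<bar>))" for i by (rule Max_ge) auto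
  then have "0 \<le> Max (range (\<lambda>i. \<bar>z $ i\<bar>))" by (meson abs_ge_zero order_trans)
  then show ?thesis by (simp add: lqnorm_def)
qed

lemma sump_pos:
  fixes z :: "real^'n"
  assumes "z \<noteq> 0" "p > 1"
  shows "(\<Sum>i\<in>UNIV. \<bar>z $ i\<bar> powr p) > 0"
proof -
  obtain j where "z $ j \<noteq> 0" using assms(1) by (metis vec_eq_iff zero_index)
  then have "\<bar>z $ j\<bar> powr p > 0" by simp
  moreover have "\<bar>z $ j\<bar> powr p \<le> (\<Sum>i\<in>UNIV. \<bar>z $ i\<bar> powr p)"
    by (rule member_le_sum) auto
  ultimately show ?thesis by linarith
qed

lemma minkowski_fin:
  fixes u v :: "real^'n"
  assumes p: "p > 1"
  shows "lqnorm (ereal p) (u + v) \<le> lqnorm (ereal p) u + lqnorm (ereal p) v"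
proof (cases "u = 0 \<or> v = 0")
  case True then show ?thesis by (auto simp: lq_nonneg)
next
  case False
  define Nu where "Nu = (\<Sum>i\<in>UNIV. \<bar>u $ i\<bar> powr p)"
  define Nv where "Nv = (\<Sum>i\<in>UNIV. \<bar>v $ i\<bar> powr p)"
  define a where "a = Nu powr (1/p)"
  define b where "b = Nv powr (1/p)"
  have Nu: "Nu > 0" and Nv: "Nv > 0" using sump_pos False p by (auto simp: Nu_def Nv_def)
  have a: "a > 0" and b: "b > 0" using Nu Nv by (auto simp: a_def b_def)
  have ap: "a powr p = Nu" using Nu p by (simp add: a_def powr_powr)
  have bp: "b powr p = Nv" using Nv p by (simp add: b_def powr_powr)
  define t where "t = b / (a + b)"
  have t: "0 \<le> t" "t \<le> 1" "1 - t = a / (a+b)" using a b by (auto simp: t_def field_simps)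
  have "(\<Sum>i\<in>UNIV. \<bar>(u+v) $ i\<bar> powr p) / (a+b) powr p
      = (\<Sum>i\<in>UNIV. (\<bar>(u+v) $ i\<bar> / (a+b)) powr p)"
    using a b by (simp add: powr_divide sum_divide_distrib)
  also have "\<dots> \<le> (\<Sum>i\<in>UNIV. ((1-t) * (\<bar>u $ i\<bar>/a) + t * (\<bar>v $ i\<bar>/b)) powr p)"
  proof (rule sum_mono)
    fix i
    have "\<bar>(u+v) $ i\<bar> / (a+b) \<le> (1-t) * (\<bar>u $ i\<bar>/a) + t * (\<bar>v $ i\<bar>/b)"
    proof -
      have eq: "(1-t) * (\<bar>u $ i\<bar>/a) + t * (\<bar>v $ i\<bar>/b) = (\<bar>u $ i\<bar> + \<bar>v $ i\<bar>)/(a+b)"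
      proof -
        have "(1-t) * (\<bar>u $ i\<bar>/a) = \<bar>u $ i\<bar>/(a+b)" unfolding t(3) using a b by auto
        moreover have "t * (\<bar>v $ i\<bar>/b) = \<bar>v $ i\<bar>/(a+b)" unfolding t_def using a b by auto
        ultimately show ?thesis by (simp add: add_divide_distrib)
      qed
      show ?thesis unfolding eq using a b
        by (intro divide_right_mono) (auto simp: abs_triangle_ineq)
    qed
    then show "(\<bar>(u+v) $ i\<bar> / (a+b)) powr p \<le> ((1-t) * (\<bar>u $ i\<bar>/a) + t * (\<bar>v $ i\<bar>/b)) powr p"
      using p a b by (intro powr_mono2) auto
  qed
  also have "\<dots> \<le> (\<Sum>i\<in>UNIV. (1-t) * (\<bar>u $ i\<bar>/a) powr p + t * (\<bar>v $ i\<bar>/b) powr p)"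
    by (rule sum_mono, rule pconv) (use p t a b in auto)
  also have "\<dots> = (1-t) * (Nu / a powr p) + t * (Nv / b powr p)"
    using a b by (simp add: sum.distrib sum_distrib_left powr_divide Nu_def Nv_def sum_divide_distrib)
  also have "\<dots> = 1" using ap bp Nu Nv by simp
  finally have le: "(\<Sum>i\<in>UNIV. \<bar>(u+v) $ i\<bar> powr p) \<le> (a+b) powr p"
    using a b by (simp add: divide_le_eq)
  have "lqnorm (ereal p) (u + v) \<le> ((a+b) powr p) powr (1/p)"
    unfolding lq_fin[OF p] using p le by (intro powr_mono2) (auto simp: sum_nonneg)
  also have "\<dots> = a + b" using a b p by (simp add: powr_powr)
  finally show ?thesis using p by (simp add: lq_fin a_def b_def Nu_def Nv_def)
qed



lemma q_cases:
  assumes "1 < (q::ereal)"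
  obtains "q = \<infinity>" | p where "q = ereal p" "p > 1"
  using assms by (cases q) auto

lemma lq_inf: "lqnorm \<infinity> z = Max (range (\<lambda>i. \<bar>z $ i\<bar>))"
  by (simp add: lqnorm_def)

lemma lq_inf_ge: "\<bar>z $ i\<bar> \<le> lqnorm \<infinity> z"
  unfolding lq_inf by (rule Max_ge) auto

lemma lq_inf_ex: "\<exists>j. lqnorm \<infinity> z = \<bar>z $ j\<bar>"
proof -
  have "Max (range (\<lambda>i. \<bar>z $ i\<bar>)) \<in> range (\<lambda>i. \<bar>z $ i\<bar>)" by (rule Max_in) auto
  then show ?thesis unfolding lq_inf by (metis (no_types, lifting) rangeE)
qed

lemma mink:
  assumes "1 < q"
  shows "lqnorm q (u + v) \<le> lqnorm q u + lqnorm q (v::real^'n)"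
  using assms
proof (cases rule: q_cases)
  case 1
  obtain j where "lqnorm \<infinity> (u+v) = \<bar>(u+v) $ j\<bar>" using lq_inf_ex by blast
  also have "\<dots> \<le> \<bar>u $ j\<bar> + \<bar>v $ j\<bar>" by (simp add: abs_triangle_ineq)
  also have "\<dots> \<le> lqnorm \<infinity> u + lqnorm \<infinity> v" using lq_inf_ge by (intro add_mono) auto
  finally show ?thesis using 1 by simp
next
  case (2 p) then show ?thesis using minkowski_fin by simp
qed

lemma lq_pos:
  assumes "1 < q" "z \<noteq> 0"
  shows "lqnorm q (z::real^'n) > 0"
  using assms(1)
proof (cases rule: q_cases)
  case 1
  obtain j where "z $ j \<noteq> 0" using assms(2) by (metis vec_eq_iff zero_index)
  then show ?thesis using lq_inf_ge[of z j] 1 by simp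
next
  case (2 p) then show ?thesis using sump_pos[OF assms(2), of p] by (simp add: lq_fin)
qed

lemma holder_S:
  assumes "1 < q"
  shows "(\<Sum>i\<in>S. \<bar>h $ i\<bar>) \<le> real (card S) powr qexp q * lqnorm q (h::real^'n)"
  using assms
proof (cases rule: q_cases)
  case 1
  have "(\<Sum>i\<in>S. \<bar>h $ i\<bar>) \<le> (\<Sum>i\<in>S. lqnorm \<infinity> h)" by (rule sum_mono) (rule lq_inf_ge)
  also have "\<dots> = real (card S) * lqnorm \<infinity> h" by simp
  finally show ?thesis using 1 by (cases "card S = 0") (auto simp: qexp_def)
next
  case (2 p)
  have fin: "finite S" by simp
  have "(\<Sum>i\<in>S. \<bar>h $ i\<bar>) \<le> real (card S) powr (1 - 1/p) * (\<Sum>i\<in>S. \<bar>h $ i\<bar> powr p) powr (1/p)"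
    by (rule holder_count) (use 2 in auto)
  also have "\<dots> \<le> real (card S) powr (1 - 1/p) * (\<Sum>i\<in>UNIV. \<bar>h $ i\<bar> powr p) powr (1/p)"
    using 2 by (intro mult_left_mono powr_mono2 sum_mono2) (auto simp: sum_nonneg)
  finally show ?thesis using 2 by (simp add: lq_fin qexp_def)
qed

lemma qexp_pos: "1 < q \<Longrightarrow> qexp q > 0"
  by (cases rule: q_cases) (auto simp: qexp_def)

lemma qconj_pos: "1 < q \<Longrightarrow> qconj q > 0"
  by (cases rule: q_cases) (auto simp: qconj_def)

lemma qconj_qexp: "1 < q \<Longrightarrow> qconj q * qexp q = 1"
  by (cases rule: q_cases) (auto simp: qconj_def qexp_def field_simps)



lemma lq_zero: "lqnorm q (0::real^'n) = 0"
  by (simp add: lqnorm_def)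

lemma l1_nonneg: "l1norm (z::real^'n) \<ge> 0"
  by (simp add: l1norm_def sum_nonneg)

lemma l1_split: "l1norm (z::real^'n) = (\<Sum>i\<in>S. \<bar>z $ i\<bar>) + (\<Sum>i\<in>-S. \<bar>z $ i\<bar>)"
  unfolding l1norm_def
  by (metis Compl_eq_Diff_UNIV add.commute finite subset_UNIV sum.subset_diff)

lemma core:
  fixes x h z :: "real^'n" and r :: real
  assumes q: "1 < q"
    and hyp: "l1norm (x + h) \<le> l1norm x + r * lqnorm q h"
    and zk: "card {i. z $ i \<noteq> 0} \<le> k"
  shows "l1norm h \<le> 2 * (real k powr qexp q) * lqnorm q h + 2 * l1norm (x - z) + r * lqnorm q h"
proof -
  define S where "S = {i. z $ i \<noteq> 0}"
  have a: "(\<Sum>i\<in>S. \<bar>x $ i\<bar>) - (\<Sum>i\<in>S. \<bar>h $ i\<bar>) \<le> (\<Sum>i\<in>S. \<bar>(x+h) $ i\<bar>)"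
    unfolding sum_subtractf[symmetric] by (rule sum_mono, unfold vector_add_component, arith)
  have b: "(\<Sum>i\<in>-S. \<bar>h $ i\<bar>) - (\<Sum>i\<in>-S. \<bar>x $ i\<bar>) \<le> (\<Sum>i\<in>-S. \<bar>(x+h) $ i\<bar>)"
    unfolding sum_subtractf[symmetric] by (rule sum_mono, unfold vector_add_component, arith)
  have c: "(\<Sum>i\<in>-S. \<bar>x $ i\<bar>) \<le> l1norm (x - z)"
  proof -
    have "(\<Sum>i\<in>-S. \<bar>x $ i\<bar>) = (\<Sum>i\<in>-S. \<bar>(x - z) $ i\<bar>)"
      by (rule sum.cong) (auto simp: S_def)
    also have "\<dots> \<le> l1norm (x - z)" using l1_split[of "x - z" S] by (simp add: sum_nonneg)
    finally show ?thesis .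
  qed
  have d: "(\<Sum>i\<in>S. \<bar>h $ i\<bar>) \<le> real k powr qexp q * lqnorm q h"
  proof -
    have "(\<Sum>i\<in>S. \<bar>h $ i\<bar>) \<le> real (card S) powr qexp q * lqnorm q h" by (rule holder_S[OF q])
    also have "\<dots> \<le> real k powr qexp q * lqnorm q h"
      using zk qexp_pos[OF q] by (intro mult_right_mono powr_mono2) (auto simp: S_def lq_nonneg)
    finally show ?thesis .
  qed
  show ?thesis using hyp a b c d l1_split[of "x+h" S] l1_split[of x S] l1_split[of h S] by linarith
qed



theorem theorem2:
  fixes A :: "real^'n^'m" and x xhat :: "real^'n" and eps y :: "real^'m"
    and \<eta> :: real and k :: nat and q :: ereal
  assumes "\<eta> \<ge> 0" and "x \<noteq> 0" and "1 \<le> k" and "k \<le> CARD('n)"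
    and "y = A *v x + eps" and "norm eps \<le> \<eta>"
    and "1 < q"
    and "rho q (Cq q k x) A > 0"
    and "xhat \<noteq> 0" and "norm (y - A *v xhat) \<le> \<eta>"
    and "\<forall>z. z \<noteq> 0 \<and> norm (y - A *v z) \<le> \<eta> \<longrightarrow>
            l1norm xhat / lqnorm q xhat \<le> l1norm z / lqnorm q z"
  shows "lqnorm q (xhat - x) \<le> 2 * \<eta> / rho q (Cq q k x) A
           + real k powr (- qexp q) * sigma1 k x
       \<and> l1norm (xhat - x) \<le>
           (4 * real k powr qexp q + 2 * sq q x powr qexp q) * \<eta> / rho q (Cq q k x) A
           + (4 + (sq q x / real k) powr qexp q) * sigma1 k x"
proof -
  note q = assms(7)
  define h where "h = xhat - x"
  define \<rho> where "\<rho> = rho q (Cq q k x) A"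
  define r where "r = l1norm x / lqnorm q x"
  define K where "K = real k powr qexp q"
  define s where "s = sq q x"
  have \<rho>: "\<rho> > 0" using assms(8) by (simp add: \<rho>_def)
  have K: "K > 0" using assms(3) by (simp add: K_def)
  have lqx: "lqnorm q x > 0" by (rule lq_pos[OF q assms(2)])
  have lqxh: "lqnorm q xhat > 0" by (rule lq_pos[OF q assms(9)])
  have r0: "r \<ge> 0" using lqx l1_nonneg[of x] by (simp add: r_def)
  have s0: "s \<ge> 0" by (simp add: s_def sq_def)
  have sr: "s powr qexp q = r"
    using qconj_qexp[OF q] r0 by (simp add: s_def sq_def r_def[symmetric] powr_powr)
  have skr: "(s / real k) powr qexp q = r / K"
    using s0 assms(3) sr by (simp add: powr_divide K_def)
  have kmK: "real k powr (- qexp q) = 1 / K"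
    using assms(3) by (simp add: K_def powr_minus divide_inverse)
  have xh: "xhat = x + h" by (simp add: h_def)
  have rat: "l1norm xhat / lqnorm q xhat \<le> r"
    using assms(11) assms(2,5,6) by (auto simp: r_def)
  have hyp: "l1norm (x + h) \<le> l1norm x + r * lqnorm q h"
  proof -
    have "l1norm xhat \<le> r * lqnorm q xhat" using rat lqxh by (simp add: divide_le_eq)
    also have "\<dots> \<le> r * (lqnorm q x + lqnorm q h)"
      using r0 mink[OF q, of x h] xh by (intro mult_left_mono) auto
    also have "\<dots> = l1norm x + r * lqnorm q h" using lqx by (simp add: r_def field_simps)
    finally show ?thesis using xh by simp
  qed
  have Ah: "norm (A *v h) \<le> 2 * \<eta>"
  proof -
    have "A *v h = eps - (y - A *v xhat)"
      by (simp add: h_def matrix_vector_mult_diff_distrib assms(5))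
    then have "norm (A *v h) \<le> norm eps + norm (y - A *v xhat)"
      by (simp add: norm_triangle_ineq4)
    then show ?thesis using assms(6,10) by simp
  qed
  have Cq: "Cq q k x = (4 * K + r) powr qconj q"
    by (simp add: Cq_def K_def sr[unfolded s_def])
  have rhob: "lqnorm q h \<le> 2 * \<eta> / \<rho>" if hh: "l1norm h \<le> (4 * K + r) * lqnorm q h"
  proof (cases "h = 0")
    case True then show ?thesis using \<rho> assms(1) by (simp add: lq_zero)
  next
    case False
    have lqh: "lqnorm q h > 0" by (rule lq_pos[OF q False])
    have "l1norm h / lqnorm q h \<le> 4 * K + r" using hh lqh by (simp add: divide_le_eq)
    then have "sq q h \<le> Cq q k x"
      unfolding Cq sq_def using qconj_pos[OF q] lqh l1_nonneg[of h]
      by (intro powr_mono2) auto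
    then have "\<rho> \<le> norm (A *v h) / lqnorm q h"
      unfolding \<rho>_def rho_def
      by (intro cInf_lower) (auto intro!: bdd_belowI[where m=0] simp: False lq_nonneg)
    then have "\<rho> * lqnorm q h \<le> norm (A *v h)" using lqh by (simp add: le_divide_eq)
    then have "\<rho> * lqnorm q h \<le> 2 * \<eta>" using Ah by linarith
    then show ?thesis using \<rho> by (simp add: le_divide_eq mult.commute)
  qed
  define E where "E = {l1norm (x - z) | z. card {i. z $ i \<noteq> 0} \<le> k}"
  have E: "E \<noteq> {}" proof -
    have "l1norm (x - 0) \<in> E" unfolding E_def by (rule CollectI, rule exI[of _ 0]) auto
    then show ?thesis by blast
  qed
  have sig: "sigma1 k x = Inf E" by (simp add: sigma1_def E_def)
  have bnd: "lqnorm q h \<le> 2 * \<eta> / \<rho> + e / K \<and> l1norm h \<le> (4 * K + 2 * r) * \<eta> / \<rho> + (4 + r / K) * e"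
    if "e \<in> E" for e
  proof -
    obtain z where z: "e = l1norm (x - z)" "card {i. z $ i \<noteq> 0} \<le> k" using \<open>e \<in> E\<close> by (auto simp: E_def)
    have e0: "e \<ge> 0" using z l1_nonneg by simp
    have co: "l1norm h \<le> 2 * K * lqnorm q h + 2 * e + r * lqnorm q h"
      using core[OF q hyp z(2)] z(1) by (simp add: K_def)
    have lqh0: "lqnorm q h \<ge> 0" by (rule lq_nonneg)
    have T0: "2 * \<eta> / \<rho> \<ge> 0" using \<rho> assms(1) by simp
    have eq2: "(4 * K + 2 * r) * \<eta> / \<rho> = (2 * K + r) * (2 * \<eta> / \<rho>)" by (simp add: field_simps)
    show ?thesis
    proof (cases "e \<le> K * lqnorm q h")
      case True
      have "l1norm h \<le> (4 * K + r) * lqnorm q h" using co True by (simp add: algebra_simps)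
      then have L: "lqnorm q h \<le> 2 * \<eta> / \<rho>" by (rule rhob)
      have "l1norm h \<le> (2 * K + r) * (2 * \<eta> / \<rho>) + 2 * e"
        using co mult_left_mono[OF L, of "2 * K + r"] K r0 by (simp add: algebra_simps)
      moreover have "2 * e \<le> (4 + r / K) * e" using e0 K r0 by (simp add: algebra_simps)
      moreover have "e / K \<ge> 0" using e0 K by simp
      ultimately show ?thesis using L eq2 by linarith
    next
      case False
      then have L: "lqnorm q h \<le> e / K" using K by (simp add: le_divide_eq mult.commute)
      have "l1norm h \<le> (2 * K + r) * (e / K) + 2 * e"
        using co mult_left_mono[OF L, of "2 * K + r"] K r0 by (simp add: algebra_simps)
      also have "\<dots> = (4 + r / K) * e" using K by (simp add: field_simps)
      finally have "l1norm h \<le> (4 + r / K) * e" .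
      moreover have "(4 * K + 2 * r) * \<eta> / \<rho> \<ge> 0" using K r0 assms(1) \<rho> by simp
      ultimately show ?thesis using L T0 by linarith
    qed
  qed
  have c1: "(lqnorm q h - 2 * \<eta> / \<rho>) * K \<le> Inf E"
    by (rule cInf_greatest[OF E]) (use bnd K in \<open>auto simp: field_simps\<close>)
  have cpos: "4 + r / K > 0" using r0 K by (simp add: add_pos_nonneg)
  have c2: "(l1norm h - (4 * K + 2 * r) * \<eta> / \<rho>) / (4 + r / K) \<le> Inf E"
  proof (rule cInf_greatest[OF E])
    fix e assume "e \<in> E"
    then have "l1norm h - (4 * K + 2 * r) * \<eta> / \<rho> \<le> (4 + r / K) * e" using bnd by fastforce
    then show "(l1norm h - (4 * K + 2 * r) * \<eta> / \<rho>) / (4 + r / K) \<le> e"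
      using cpos by (simp add: divide_le_eq mult.commute)
  qed
  have f1: "lqnorm q h \<le> 2 * \<eta> / \<rho> + (1 / K) * Inf E" using c1 K by (simp add: field_simps)
  have f2: "l1norm h \<le> (4 * K + 2 * r) * \<eta> / \<rho> + (4 + r / K) * Inf E"
    using c2 cpos by (simp add: divide_le_eq mult.commute)
  show ?thesis
    using f1 f2 unfolding h_def[symmetric] \<rho>_def[symmetric] sig kmK skr[unfolded s_def] sr[unfolded s_def] K_def[symmetric]
    by simp
qed

end
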